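(* Let $n>2$ be an integer. For integers $0\le r\le s<n$ and $r<k\le n$ set $$P_{n,r,s}(k)=\begin{cases}\dfrac{r(n-k)}{n(n-1)(k-1)}, & r<k<s,\\[2mm] \dfrac{r(s-1)(n-k)}{n(n-1)(k-1)(k-2)}+\dfrac{r(s-1)}{n(n-1)(k-2)}, & k\ge s,\end{cases}$$ and $$E^{PD,C}_n(r,s)=\sum_{k=r+1}^{n}\left(1-\frac{k}{n}\right)P_{n,r,s}(k),$$ where any term whose denominator vanishes is interpreted as $0$. Let $(\mathcal{M}_1(n),\mathcal{M}_2(n))$ be a point at which $E^{PD,C}_n$ attains its maximum. Let $\beta=0.39422\dots$ be the unique solution in $(0,1)$ of $-2+\frac1\beta+\beta+\log\beta=0$, and let $\alpha=0.17248\dots$ be the unique solution in $(0,\beta)$ of $1-\frac1\beta-2\beta-\frac{\beta^2}{2}+4\alpha-\frac{3\alpha^2}{2}-\log\alpha=0$. Then (i) $\lim_{n\to\infty}\mathcal{M}_1(n)/n=\alpha=0.17248\dots$; (ii) $\lim_{n\to\infty}\mathcal{M}_2(n)/n=\beta=0.39422\dots$; (iii) $\lim_{n\to\infty}E^{PD,C}_n(\mathcal{M}_1(n),\mathcal{M}_2(n))=0.11811\dots$ (namely the value $\frac{\alpha}{2}\left(2-6\beta+\beta^2+4\alpha-\alpha^2+2(1+\beta)\log\beta-2\log\alpha\right)$).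
   Context: $E^{PD,C}_n(r,s)$ is the expected payoff, in the Postdoc secretary problem (goal: select the overall second best of $n$ randomly ordered candidates) with payoff $1-k/n$ when the accepted $k$-th candidate is the overall second best, of the two-threshold strategy: reject the first $r$ candidates, then accept the first candidate better than all preceding ones until the $s$-th interview, and thereafter accept the first candidate which is best or second best among those seen so far. *)

theory Defs
  imports Complex_Main
begin

text \<open>P_{n,r,s}(k); arithmetic is carried out over the reals, and a term whose
  denominator vanishes is 0 (Isabelle convention x / 0 = 0, applied term-wise).\<close>
definition P_pd :: "nat \<Rightarrow> nat \<Rightarrow> nat \<Rightarrow> nat \<Rightarrow> real" where
  "P_pd n r s k =
     (if k < s then
        real r * (real n - real k) / (real n * (real n - 1) * (real k - 1))
      else
        real r * (real s - 1) * (real n - real k)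
          / (real n * (real n - 1) * (real k - 1) * (real k - 2))
        + real r * (real s - 1) / (real n * (real n - 1) * (real k - 2)))"

definition E_pdc :: "nat \<Rightarrow> nat \<Rightarrow> nat \<Rightarrow> real" where
  "E_pdc n r s = (\<Sum>k = r + 1..n. (1 - real k / real n) * P_pd n r s k)"

definition admissible :: "nat \<Rightarrow> nat \<Rightarrow> nat \<Rightarrow> bool" where
  "admissible n r s \<longleftrightarrow> r \<le> s \<and> s < n"

end

theory Submission
  imports Defs
begin

definition Hs :: "nat \<Rightarrow> real" where "Hs m = (\<Sum>j=1..m. 1 / real j)"

lemma Hs_0 [simp]: "Hs 0 = 0" by (simp add: Hs_def)
lemma Hs_Suc: "Hs (Suc m) = Hs m + 1 / real (Suc m)"
  by (simp add: Hs_def)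

lemma Hs_up:
  assumes "1 \<le> b" "b \<le> c"
  shows "Hs c - Hs b \<le> ln (real c / real b)"
  using assms(2)
proof (induction c rule: dec_induct)
  case base then show ?case using assms by simp
next
  case (step c)
  have cpos: "real c > 0" using step assms by simp
  have "1 / real (Suc c) \<le> ln (real (Suc c) / real c)"
  proof -
    have "ln (real c / real (Suc c)) \<le> real c / real (Suc c) - 1"
      by (rule ln_le_minus_one) (use cpos in simp)
    also have "\<dots> = - (1 / real (Suc c))" by (simp add: field_simps)
    finally have "ln (real c / real (Suc c)) \<le> - (1 / real (Suc c))" .
    moreover have "ln (real c / real (Suc c)) = - ln (real (Suc c) / real c)"
      using cpos by (simp add: ln_div)
    ultimately show ?thesis by simp
  qed
  moreover have "ln (real c / real b) + ln (real (Suc c) / real c) = ln (real (Suc c) / real b)"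
    using cpos assms by (simp add: ln_div)
  ultimately show ?case using step by (simp add: Hs_Suc)
qed

lemma Hs_low:
  assumes "b \<le> c"
  shows "ln ((real c + 1) / (real b + 1)) \<le> Hs c - Hs b"
  using assms
proof (induction c rule: dec_induct)
  case base then show ?case by simp
next
  case (step c)
  have "ln ((real c + 2) / (real c + 1)) \<le> (real c + 2) / (real c + 1) - 1"
    by (rule ln_le_minus_one) simp
  also have "\<dots> = 1 / real (Suc c)" by (simp add: field_simps)
  finally have 1: "ln ((real c + 2) / (real c + 1)) \<le> 1 / real (Suc c)" .
  have "ln ((real c + 1) / (real b + 1)) + ln ((real c + 2) / (real c + 1))
        = ln ((real (Suc c) + 1) / (real b + 1))"
    by (simp add: ln_div add.commute)
  then show ?case using step 1 by (simp add: Hs_Suc)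
qed

lemma Hs_nonneg: "Hs m \<ge> 0" unfolding Hs_def by (intro sum_nonneg) auto

lemma sumA:
  assumes "1 \<le> r" "r \<le> m"
  shows "(\<Sum>k=r+1..m+1. (real n - real k)^2 / (real k - 1)) =
    (real n - 1)^2 * (Hs m - Hs (r-1)) - 2*(real n - 1)*(real m - real r + 1)
    + (real m * (real m + 1) - (real r - 1) * real r) / 2"
  using assms(2)
proof (induction m rule: dec_induct)
  case base
  obtain q where q: "r = Suc q" using assms by (cases r) auto
  have "real r \<noteq> 0" using assms by simp
  have hh: "Hs r - Hs (r - 1) = 1 / real r" using q by (simp add: Hs_Suc)
  have "(real n - real (r+1))^2 / (real (r+1) - 1) = (real n - 1)^2 * (1 / real r) - 2*(real n - 1) + real r"
    using \<open>real r \<noteq> 0\<close> by (simp add: field_simps power2_eq_square)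
  then show ?case unfolding hh by (simp add: algebra_simps power2_eq_square)
next
  case (step m)
  have e1: "(\<Sum>k=r+1..Suc m+1. (real n - real k)^2 / (real k - 1)) =
     (\<Sum>k=r+1..m+1. (real n - real k)^2 / (real k - 1)) + (real n - real (m+2))^2 / (real (m+2) - 1)"
    using step by simp
  define d where "d = 1 / (real m + 1)"
  have e2: "(real n - real (m+2))^2 / (real (m+2) - 1) = (real n - 1)^2 * d - 2*(real n - 1) + (real m + 1)"
    unfolding d_def by (simp add: field_simps power2_eq_square)
  have e3: "Hs (Suc m) = Hs m + d" unfolding d_def by (simp add: Hs_Suc add.commute)
  show ?case unfolding e1 e2 step.IH e3 by (simp add: algebra_simps power2_eq_square) (simp add: field_simps)
qed

lemma sumB:
  assumes "3 \<le> m" "m \<le> n"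
  shows "(\<Sum>k=m..n. (real n - real k) / ((real k - 1) * (real k - 2))) =
     (real n - 1) / (real m - 2) - 1 - (Hs (n-2) - Hs (m-3))"
  using assms(2,1)
proof (induction m rule: inc_induct)
  case base
  have q: "n - 2 = Suc (n - 3)" using base by simp
  have "real n - 2 \<noteq> 0" using base by simp
  moreover have "real (Suc (n-3)) = real n - 2" using base by simp
  ultimately show ?case using q by (simp add: Hs_Suc field_simps)
next
  case (step m)
  have s: "sum (\<lambda>k. (real n - real k) / ((real k - 1) * (real k - 2))) {m..n} =
     (real n - real m) / ((real m - 1) * (real m - 2)) + sum (\<lambda>k. (real n - real k) / ((real k - 1) * (real k - 2))) {Suc m..n}"
    using step by (simp add: sum.atLeast_Suc_atMost)
  have q: "Suc m - 3 = Suc (m - 3)" using step by simp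
  have r: "real (Suc (m-3)) = real m - 2" using step by simp
  have m2: "real m - 2 \<noteq> 0" "real m - 1 \<noteq> 0" using step by simp_all
  have t: "(real n - real m) / ((real m - 1) * (real m - 2)) =
     (real n - 1) / (real m - 2) - (real n - 1) / (real (Suc m) - 2) - 1 / (real m - 2)"
  proof -
    have D: "(real m - 1) * (real m - 2) \<noteq> 0" using m2 by simp
    have "real (Suc m) - 2 = real m - 1" by simp
    then show ?thesis using m2 D by (simp add: divide_simps) (simp add: algebra_simps)
  qed
  have hq: "Hs (Suc m - 3) = Hs (m - 3) + 1 / (real m - 2)" unfolding q Hs_Suc r ..
  have hq2: "Hs (m - 2) = Hs (m - 3) + 1 / (real m - 2)" using hq by simp
  show ?case unfolding s step.IH[OF _] t hq using step hq2 by simp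
qed

definition phi :: "real \<Rightarrow> real" where "phi x = ln x - 2*x + x^2/2"
definition Phi :: "real \<Rightarrow> real" where "Phi b = (1+b) * ln b - 3*b + b^2/2 + 1"
definition hh :: "real \<Rightarrow> real" where "hh b = 1 - b + b * ln b"
definition psi :: "real \<Rightarrow> real" where "psi u = 1/u - 1 + ln u"
definition FF :: "real \<Rightarrow> real \<Rightarrow> real" where "FF a b = a * (Phi b - phi a)"
definition Hf :: "real \<Rightarrow> real" where "Hf b = ln b + 1/b - 2 + b"

lemma Phi_split: "Phi b = phi b + hh b"
  unfolding Phi_def phi_def hh_def by (simp add: algebra_simps)

lemma inc_strict:
  fixes f f' :: "real \<Rightarrow> real"
  assumes "a < b" "\<And>x. a \<le> x \<Longrightarrow> x \<le> b \<Longrightarrow> DERIV f x :> f' x"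
    "\<And>x. a < x \<Longrightarrow> x < b \<Longrightarrow> f' x > 0"
  shows "f a < f b"
proof -
  obtain z where z: "a < z" "z < b" "f b - f a = (b - a) * f' z"
    using MVT2[OF assms(1,2)] by blast
  have "(b - a) * f' z > 0" using assms(1,3) z by simp
  then show ?thesis using z by simp
qed

lemma inc_weak:
  fixes f f' :: "real \<Rightarrow> real"
  assumes "a \<le> b" "\<And>x. a \<le> x \<Longrightarrow> x \<le> b \<Longrightarrow> DERIV f x :> f' x"
    "\<And>x. a < x \<Longrightarrow> x < b \<Longrightarrow> f' x \<ge> 0"
  shows "f a \<le> f b"
proof (cases "a = b")
  case False
  then have ab: "a < b" using assms by simp
  obtain z where z: "a < z" "z < b" "f b - f a = (b - a) * f' z"
    using MVT2[OF ab assms(2)] by blast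
  have "(b - a) * f' z \<ge> 0" using ab assms(3) z by simp
  then show ?thesis using z by simp
qed simp

lemma dec_strict:
  fixes f f' :: "real \<Rightarrow> real"
  assumes "a < b" "\<And>x. a \<le> x \<Longrightarrow> x \<le> b \<Longrightarrow> DERIV f x :> f' x"
    "\<And>x. a < x \<Longrightarrow> x < b \<Longrightarrow> f' x < 0"
  shows "f b < f a"
proof -
  obtain z where z: "a < z" "z < b" "f b - f a = (b - a) * f' z"
    using MVT2[OF assms(1,2)] by blast
  have "(b - a) * f' z < 0" using assms(1,3) z by (simp add: mult_pos_neg)
  then show ?thesis using z by simp
qed

lemma dec_weak:
  fixes f f' :: "real \<Rightarrow> real"
  assumes "a \<le> b" "\<And>x. a \<le> x \<Longrightarrow> x \<le> b \<Longrightarrow> DERIV f x :> f' x"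
    "\<And>x. a < x \<Longrightarrow> x < b \<Longrightarrow> f' x \<le> 0"
  shows "f b \<le> f a"
proof (cases "a = b")
  case False
  then have ab: "a < b" using assms by simp
  obtain z where z: "a < z" "z < b" "f b - f a = (b - a) * f' z"
    using MVT2[OF ab assms(2)] by blast
  have "(b - a) * f' z \<le> 0" using ab assms(3) z by (simp add: mult_nonneg_nonpos)
  then show ?thesis using z by simp
qed simp

lemma DERIV_phi: "x > 0 \<Longrightarrow> DERIV phi x :> (1/x - 2 + x)"
  unfolding phi_def[abs_def] by (auto intro!: derivative_eq_intros simp: field_simps power2_eq_square)

lemma phi_mono: assumes "0 < x" "x \<le> y" shows "phi x \<le> phi y"
proof (rule inc_weak[OF assms(2)])
  fix t assume "x \<le> t" "t \<le> y" then show "DERIV phi t :> (1/t - 2 + t)" using assms by (intro DERIV_phi) simp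
next
  fix t assume t: "x < t" "t < y"
  then have tp: "t > 0" using assms by simp
  have "1/t - 2 + t = (1 - t)^2 / t" using tp by (simp add: field_simps power2_eq_square)
  then show "1/t - 2 + t \<ge> 0" using tp by simp
qed

lemma DERIV_Hf: "x > 0 \<Longrightarrow> DERIV Hf x :> (1/x - 1/x^2 + 1)"
  unfolding Hf_def[abs_def] by (auto intro!: derivative_eq_intros simp: field_simps power2_eq_square)

lemma DERIV_Phi: "x > 0 \<Longrightarrow> DERIV Phi x :> Hf x"
  unfolding Phi_def[abs_def] Hf_def by (auto intro!: derivative_eq_intros simp: field_simps power2_eq_square)

definition gold :: real where "gold = (sqrt 5 - 1) / 2"

lemma gold_bounds: "1/2 < gold" "gold < 1"
proof -
  have s: "sqrt 5 ^ 2 = (5::real)" "sqrt (5::real) \<ge> 0" by simp_all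
  have a: "2 < sqrt (5::real)" by (rule power_less_imp_less_base[of _ 2]) (use s in simp_all)
  have b: "sqrt 5 < (3::real)" by (rule power_less_imp_less_base[of _ 2]) (use s in simp_all)
  show "1/2 < gold" "gold < 1" unfolding gold_def using a b by simp_all
qed

lemma gold_fact: "x^2 + x - 1 = (x - gold) * (x + gold + 1)"
proof -
  have s: "sqrt 5 ^ 2 = 5" by simp
  show ?thesis unfolding gold_def by (simp add: algebra_simps power2_eq_square) (use s in \<open>simp add: power2_eq_square field_simps\<close>)
qed

lemma gold_sq: "gold * gold + gold = 1"
  using gold_fact[of 0] by (simp add: algebra_simps)

lemma Hf_deriv_form: "x > 0 \<Longrightarrow> 1/x - 1/x^2 + 1 = (x - gold) * (x + gold + 1) / x^2"
  by (simp add: field_simps power2_eq_square) (use gold_sq in \<open>simp add: algebra_simps\<close>)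

lemma Hf_dec: assumes "0 < x" "x < y" "y \<le> gold" shows "Hf y < Hf x"
proof (rule dec_strict[OF assms(2)])
  fix t assume "x \<le> t" "t \<le> y" then show "DERIV Hf t :> (1/t - 1/t^2 + 1)" using assms by (intro DERIV_Hf) simp
next
  fix t assume t: "x < t" "t < y"
  then have tp: "t > 0" using assms by simp
  have "(t - gold) * (t + gold + 1) / t^2 < 0"
    using t assms gold_bounds tp by (intro divide_neg_pos mult_neg_pos) auto
  then show "1/t - 1/t^2 + 1 < 0" using Hf_deriv_form[OF tp] by simp
qed

lemma Hf_inc: assumes "gold \<le> x" "x < y" shows "Hf x < Hf y"
proof (rule inc_strict[OF assms(2)])
  fix t assume "x \<le> t" "t \<le> y" then show "DERIV Hf t :> (1/t - 1/t^2 + 1)" using assms gold_bounds by (intro DERIV_Hf) simp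
next
  fix t assume t: "x < t" "t < y"
  then have tp: "t > 0" using assms gold_bounds by simp
  have "(t - gold) * (t + gold + 1) / t^2 > 0"
    using t assms gold_bounds tp by (intro divide_pos_pos mult_pos_pos) auto
  then show "1/t - 1/t^2 + 1 > 0" using Hf_deriv_form[OF tp] by simp
qed

lemma Hf_1: "Hf 1 = 0" by (simp add: Hf_def)

lemma ln_half: "ln (1/2::real) < - 1/2"
proof -
  have "ln (1/2::real) \<le> 1/2 - 1" by (rule ln_le_minus_one) simp
  moreover have "ln (1/2::real) \<noteq> 1/2 - 1"
    using ln_eq_minus_one[of "1/2::real"] by auto
  ultimately show ?thesis by simp
qed

lemma Hf_half: "Hf (1/2) < 0" unfolding Hf_def using ln_half by simp

locale betaloc =
  fixes \<beta> :: real
  assumes b0: "0 < \<beta>" and b1: "\<beta> < 1" and beq: "-2 + 1/\<beta> + \<beta> + ln \<beta> = 0"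
begin

lemma Hf_beta: "Hf \<beta> = 0" using beq unfolding Hf_def by simp

lemma beta_lt_gold: "\<beta> < gold"
proof (rule ccontr)
  assume "\<not> \<beta> < gold"
  then have "Hf \<beta> < Hf 1" using Hf_inc[of \<beta> 1] b1 by simp
  then show False using Hf_beta Hf_1 by simp
qed

lemma Hf_pos: "0 < b \<Longrightarrow> b < \<beta> \<Longrightarrow> Hf b > 0"
  using Hf_dec[of b \<beta>] beta_lt_gold Hf_beta by simp

lemma Hf_neg: assumes "\<beta> < b" "b < 1" shows "Hf b < 0"
proof (cases "b \<le> gold")
  case True then show ?thesis using Hf_dec[of \<beta> b] b0 assms Hf_beta by simp
next
  case False then show ?thesis using Hf_inc[of b 1] assms Hf_1 by simp
qed

lemma beta_half: "\<beta> < 1/2"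
proof (rule ccontr)
  assume "\<not> \<beta> < 1/2"
  then have "1/2 < \<beta> \<or> \<beta> = 1/2" by auto
  then show False
  proof
    assume "1/2 < \<beta>" then have "Hf (1/2) > 0" by (intro Hf_pos) auto
    then show False using Hf_half by simp
  next
    assume e: "\<beta> = 1/2" then show False using Hf_half Hf_beta by (simp add: e)
  qed
qed

lemma ln_beta: "ln \<beta> = 2 - 1/\<beta> - \<beta>" using beq by simp

lemma Phi_inc: assumes "0 < x" "x < y" "y \<le> \<beta>" shows "Phi x < Phi y"
proof (rule inc_strict[OF assms(2)])
  fix t assume "x \<le> t" "t \<le> y" then show "DERIV Phi t :> Hf t" using assms by (intro DERIV_Phi) simp
next
  fix t assume "x < t" "t < y" then show "Hf t > 0" using assms by (intro Hf_pos) auto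
qed

lemma Phi_dec: assumes "\<beta> \<le> x" "x < y" "y \<le> 1" shows "Phi y < Phi x"
proof (rule dec_strict[OF assms(2)])
  fix t assume "x \<le> t" "t \<le> y" then show "DERIV Phi t :> Hf t" using assms b0 by (intro DERIV_Phi) simp
next
  fix t assume "x < t" "t < y" then show "Hf t < 0" using assms by (intro Hf_neg) auto
qed

lemma Phi_le: assumes "0 < b" "b \<le> 1" shows "Phi b \<le> Phi \<beta>"
proof -
  consider "b < \<beta>" | "b = \<beta>" | "\<beta> < b" by linarith
  then show ?thesis
  proof cases
    case 1 then show ?thesis using Phi_inc[of b \<beta>] assms by simp
  next
    case 3 then show ?thesis using Phi_dec[of \<beta> b] assms by simp
  qed simp
qed

end

lemma psi_nonneg: assumes "0 < u" "u \<le> 1" shows "psi u \<ge> 0"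
proof -
  have "ln (1/u) \<le> 1/u - 1" by (rule ln_le_minus_one) (use assms in simp)
  then show ?thesis unfolding psi_def using assms by (simp add: ln_div)
qed

lemma psi_le: assumes "0 < u" "u \<le> 1" shows "psi u \<le> 1/u"
  unfolding psi_def using assms ln_le_minus_one[of u] by simp

lemma hh_psi: "u \<noteq> 0 \<Longrightarrow> hh u = u * psi u"
  unfolding hh_def psi_def by (simp add: field_simps)

lemma hh_nonneg: "0 < u \<Longrightarrow> u \<le> 1 \<Longrightarrow> hh u \<ge> 0"
  using psi_nonneg hh_psi by simp

lemma hh_le1: "0 < u \<Longrightarrow> u \<le> 1 \<Longrightarrow> hh u \<le> 1"
  unfolding hh_def using mult_nonneg_nonpos[of u "ln u"] ln_le_minus_one[of u] by simp

definition kf :: "real \<Rightarrow> real" where "kf a = 1 - a + 2*a*ln a"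

lemma DERIV_ahh: "a > 0 \<Longrightarrow> DERIV (\<lambda>a. a * hh a) a :> kf a"
  unfolding hh_def kf_def by (auto intro!: derivative_eq_intros simp: field_simps)

lemma DERIV_kf: "a > 0 \<Longrightarrow> DERIV kf a :> 1 + 2 * ln a"
  unfolding kf_def[abs_def] by (auto intro!: derivative_eq_intros simp: field_simps)

locale abloc = betaloc +
  fixes \<alpha> :: real
  assumes a0: "0 < \<alpha>" and a1: "\<alpha> < \<beta>"
    and aeq: "1 - 1/\<beta> - 2*\<beta> - \<beta>^2/2 + 4*\<alpha> - 3*\<alpha>^2/2 - ln \<alpha> = 0"
begin

definition Psi :: "real \<Rightarrow> real" where "Psi a = a * (Phi \<beta> - phi a)"
definition gfun :: "real \<Rightarrow> real" where "gfun a = Phi \<beta> - 1 + 4*a - 3*a^2/2 - ln a"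

lemma Phi_beta: "Phi \<beta> = 2 - 1/\<beta> - 2*\<beta> - \<beta>^2/2"
  unfolding Phi_def ln_beta using b0 by (simp add: field_simps power2_eq_square)

lemma DERIV_Psi: "a > 0 \<Longrightarrow> DERIV Psi a :> gfun a"
  unfolding Psi_def[abs_def] gfun_def phi_def
  by (auto intro!: derivative_eq_intros simp: field_simps power2_eq_square)

lemma DERIV_gfun: "a > 0 \<Longrightarrow> DERIV gfun a :> (- 1/a + 4 - 3*a)"
  unfolding gfun_def[abs_def]
  by (auto intro!: derivative_eq_intros simp: field_simps power2_eq_square)

lemma g_alpha: "gfun \<alpha> = 0"
  using aeq unfolding gfun_def Phi_beta by simp

lemma g_beta: "gfun \<beta> < 0"
proof -
  have "gfun \<beta> = - ((1 - \<beta>) * (1 - 2*\<beta>))"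
    unfolding gfun_def Phi_beta ln_beta by (simp add: algebra_simps power2_eq_square)
  moreover have "(1 - \<beta>) * (1 - 2*\<beta>) > 0" using b1 beta_half by simp
  ultimately show ?thesis by simp
qed

lemma gd_form: "(a::real) > 0 \<Longrightarrow> - 1/a + 4 - 3*a = - ((3*a - 1) * (a - 1)) / a"
  by (simp add: field_simps)

lemma g_dec: assumes "0 < x" "x < y" "y \<le> 1/3" shows "gfun y < gfun x"
proof (rule dec_strict[OF assms(2)])
  fix t assume "x \<le> t" "t \<le> y" then show "DERIV gfun t :> (- 1/t + 4 - 3*t)" using assms by (intro DERIV_gfun) simp
next
  fix t assume t: "x < t" "t < y"
  then have tp: "t > 0" using assms by simp
  have "(3*t - 1) * (t - 1) > 0" using t assms by (intro mult_neg_neg) auto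
  then show "- 1/t + 4 - 3*t < 0" using gd_form[OF tp] tp by (simp add: divide_neg_pos)
qed

lemma g_inc: assumes "1/3 \<le> x" "x < y" "y \<le> 1" shows "gfun x < gfun y"
proof (rule inc_strict[OF assms(2)])
  fix t assume "x \<le> t" "t \<le> y" then show "DERIV gfun t :> (- 1/t + 4 - 3*t)" using assms by (intro DERIV_gfun) simp
next
  fix t assume t: "x < t" "t < y"
  then have tp: "t > 0" using assms by simp
  have "(3*t - 1) * (t - 1) < 0" using t assms by (intro mult_pos_neg) auto
  then have "(3*t - 1) * (t - 1) / t < 0" using tp by (simp add: divide_neg_pos)
  then show "- 1/t + 4 - 3*t > 0" using gd_form[OF tp] tp by simp
qed

lemma alpha_third: "\<alpha> < 1/3"
proof (rule ccontr)
  assume "\<not> \<alpha> < 1/3"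
  then have "gfun \<alpha> < gfun \<beta>" using g_inc[of \<alpha> \<beta>] a1 b1 by simp
  then show False using g_alpha g_beta by simp
qed

lemma g_pos: "0 < a \<Longrightarrow> a < \<alpha> \<Longrightarrow> gfun a > 0"
  using g_dec[of a \<alpha>] alpha_third g_alpha by simp

lemma g_neg: assumes "\<alpha> < a" "a < \<beta>" shows "gfun a < 0"
proof (cases "a \<le> 1/3")
  case True then show ?thesis using g_dec[of \<alpha> a] a0 assms g_alpha by simp
next
  case False then show ?thesis using g_inc[of a \<beta>] assms b1 g_beta by simp
qed

lemma Psi_inc: assumes "0 < x" "x < y" "y \<le> \<alpha>" shows "Psi x < Psi y"
proof (rule inc_strict[OF assms(2)])
  fix t assume "x \<le> t" "t \<le> y" then show "DERIV Psi t :> gfun t" using assms by (intro DERIV_Psi) simp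
next
  fix t assume "x < t" "t < y" then show "gfun t > 0" using assms by (intro g_pos) auto
qed

lemma Psi_dec: assumes "\<alpha> \<le> x" "x < y" "y \<le> \<beta>" shows "Psi y < Psi x"
proof (rule dec_strict[OF assms(2)])
  fix t assume "x \<le> t" "t \<le> y" then show "DERIV Psi t :> gfun t" using assms a0 by (intro DERIV_Psi) simp
next
  fix t assume "x < t" "t < y" then show "gfun t < 0" using assms by (intro g_neg) auto
qed

lemma Psi_nonneg: assumes "0 < x" "x \<le> \<beta>" shows "Psi x \<ge> 0"
proof -
  have "Phi x \<le> Phi \<beta>" using Phi_le[of x] assms b1 by simp
  then have "Psi x \<ge> x * (Phi x - phi x)" unfolding Psi_def using assms by (simp add: mult_left_mono)
  moreover have "Phi x - phi x = hh x" using Phi_split by simp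
  moreover have "hh x \<ge> 0" using hh_nonneg assms b1 by simp
  ultimately show ?thesis using assms by (smt (verit) mult_nonneg_nonneg)
qed

lemma kf_beta: "kf \<beta> < 0"
proof -
  have "kf \<beta> = - ((1 - \<beta>) * (1 - 2*\<beta>))"
    unfolding kf_def ln_beta using b0 by (simp add: algebra_simps power2_eq_square)
  moreover have "(1 - \<beta>) * (1 - 2*\<beta>) > 0" using b1 beta_half by simp
  ultimately show ?thesis by simp
qed

lemma kf_nonpos: assumes "\<beta> < x" "x < 1" shows "kf x \<le> 0"
proof (cases "x \<le> exp (-1/2)")
  case True
  have "kf x \<le> kf \<beta>"
  proof (rule dec_weak[where f=kf])
    show "\<beta> \<le> x" using assms by simp
    fix t assume "\<beta> \<le> t" "t \<le> x" then show "DERIV kf t :> 1 + 2 * ln t" using b0 by (intro DERIV_kf) simp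
  next
    fix t assume t: "\<beta> < t" "t < x"
    then have "ln t < ln (exp (-1/2))" using True b0 by (intro ln_strict_mono) auto
    then show "1 + 2 * ln t \<le> 0" by simp
  qed
  then show ?thesis using kf_beta by simp
next
  case False
  have "kf x \<le> kf 1"
  proof (rule inc_weak[where f=kf])
    show "x \<le> 1" using assms by simp
    fix t assume "x \<le> t" "t \<le> 1" then show "DERIV kf t :> 1 + 2 * ln t" using b0 assms by (intro DERIV_kf) simp
  next
    fix t assume t: "x < t" "t < 1"
    then have "ln (exp (-1/2)) < ln t" using False by (intro ln_strict_mono) auto
    then show "1 + 2 * ln t \<ge> 0" by simp
  qed
  then show ?thesis by (simp add: kf_def)
qed

lemma ahh_le: assumes "\<beta> \<le> a" "a \<le> 1" shows "a * hh a \<le> \<beta> * hh \<beta>"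
proof (rule dec_weak[where f = "\<lambda>a. a * hh a", OF assms(1)])
  fix t assume "\<beta> \<le> t" "t \<le> a" then show "DERIV (\<lambda>a. a * hh a) t :> kf t" using b0 by (intro DERIV_ahh) simp
next
  fix t assume "\<beta> < t" "t < a" then show "kf t \<le> 0" using assms by (intro kf_nonpos) auto
qed

lemma C1: assumes "0 < a" "0 < b" "b \<le> 1" shows "FF a b = Psi a - a * (Phi \<beta> - Phi b)" "FF a b \<le> Psi a"
proof -
  show e: "FF a b = Psi a - a * (Phi \<beta> - Phi b)" unfolding FF_def Psi_def by (simp add: algebra_simps)
  have "Phi b \<le> Phi \<beta>" using Phi_le assms by simp
  then show "FF a b \<le> Psi a" unfolding e using assms by simp
qed

lemma C2: assumes "\<beta> \<le> a" "a \<le> b" "b \<le> 1" shows "FF a b \<le> Psi \<beta>"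
proof -
  have "Phi b \<le> Phi a"
  proof (cases "a = b")
    case False then show ?thesis using Phi_dec[of a b] assms by simp
  qed simp
  then have "FF a b \<le> a * (Phi a - phi a)" unfolding FF_def using assms b0 by (simp add: mult_left_mono)
  also have "\<dots> = a * hh a" using Phi_split by simp
  also have "\<dots> \<le> \<beta> * hh \<beta>" using ahh_le assms by simp
  also have "\<dots> = Psi \<beta>" unfolding Psi_def using Phi_split by simp
  finally show ?thesis .
qed

lemma C3: "Psi \<beta> < Psi \<alpha>" using Psi_dec[of \<alpha> \<beta>] a1 by simp

lemma Psi_le_max: assumes "0 < a" "a \<le> \<beta>" shows "Psi a \<le> Psi \<alpha>"
proof -
  consider "a < \<alpha>" | "a = \<alpha>" | "\<alpha> < a" by linarith
  then show ?thesis
  proof cases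
    case 1 then show ?thesis using Psi_inc[of a \<alpha>] assms by simp
  next
    case 3 then show ?thesis using Psi_dec[of \<alpha> a] assms by (cases "a = \<beta>") auto
  qed simp
qed

lemma max_pos: "Psi \<alpha> \<ge> 0" using Psi_nonneg a0 a1 by simp

lemma FF_le_max: assumes "0 \<le> a" "a \<le> b" "b \<le> 1" shows "FF a b \<le> Psi \<alpha>"
proof -
  consider "a = 0" | "0 < a" "a < \<beta>" | "\<beta> \<le> a" using assms by linarith
  then show ?thesis
  proof cases
    case 1 then show ?thesis using max_pos by (simp add: FF_def)
  next
    case 2 then show ?thesis using C1(2)[of a b] Psi_le_max[of a] assms by simp
  next
    case 3 then show ?thesis using C2 C3 assms by fastforce
  qed
qed

lemma Key1: assumes "\<epsilon> > 0"
  shows "\<exists>\<delta>>0. \<forall>a b. 0 \<le> a \<and> a \<le> b \<and> b \<le> 1 \<and> \<epsilon> \<le> \<bar>a - \<alpha>\<bar> \<longrightarrow> FF a b \<le> Psi \<alpha> - \<delta>"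
proof -
  define e where "e = min \<epsilon> (min (\<alpha>/2) ((\<beta>-\<alpha>)/2))"
  have e4: "e \<le> (\<beta>-\<alpha>)/2" unfolding e_def by (rule min.coboundedI2, rule min.cobounded2)
  have e3: "e \<le> \<alpha>/2" unfolding e_def by (rule min.coboundedI2, rule min.cobounded1)
  have e2: "e \<le> \<epsilon>" unfolding e_def by (rule min.cobounded1)
  have e1: "0 < e" using assms a0 a1 b0 b1 unfolding e_def by auto
  note e = e1 e2 e3 e4
  define M where "M = max (Psi (\<alpha> - e)) (max (Psi (\<alpha> + e)) (Psi \<beta>))"
  have m1: "Psi (\<alpha> - e) < Psi \<alpha>" using Psi_inc[of "\<alpha> - e" \<alpha>] e by simp
  have m2: "Psi (\<alpha> + e) < Psi \<alpha>" using Psi_dec[of \<alpha> "\<alpha> + e"] e by simp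
  have "M < Psi \<alpha>" using m1 m2 C3 by (simp add: M_def)
  moreover have "Psi (\<alpha> - e) \<ge> 0" using Psi_nonneg[of "\<alpha> - e"] e a1 by simp
  moreover have bnd: "FF a b \<le> M" if h: "0 \<le> a" "a \<le> b" "b \<le> 1" "\<epsilon> \<le> \<bar>a - \<alpha>\<bar>" for a b
  proof -
    consider "a = 0" | "0 < a" "a \<le> \<alpha> - e" | "\<alpha> + e \<le> a" "a < \<beta>" | "\<beta> \<le> a"
      using h e by linarith
    then show ?thesis
    proof cases
      case 1 then show ?thesis using \<open>Psi (\<alpha> - e) \<ge> 0\<close> by (simp add: FF_def M_def)
    next
      case 2
      have "Psi a \<le> Psi (\<alpha> - e)" using Psi_inc[of a "\<alpha> - e"] 2 e by (cases "a = \<alpha> - e") auto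
      then show ?thesis using C1(2)[of a b] 2 h by (simp add: M_def)
    next
      case 3
      have "Psi a \<le> Psi (\<alpha> + e)" using Psi_dec[of "\<alpha> + e" a] 3 e by (cases "a = \<alpha> + e") auto
      then show ?thesis using C1(2)[of a b] 3 h e a0 by (simp add: M_def)
    next
      case 4 then show ?thesis using C2[of a b] h by (simp add: M_def)
    qed
  qed
  ultimately show ?thesis by (intro exI[of _ "Psi \<alpha> - M"]) force
qed

lemma Key2: assumes "\<epsilon> > 0"
  shows "\<exists>\<delta>>0. \<forall>b. 0 < b \<and> b \<le> 1 \<and> \<epsilon> \<le> \<bar>b - \<beta>\<bar> \<longrightarrow> Phi b \<le> Phi \<beta> - \<delta>"
proof -
  define e where "e = min \<epsilon> (min (\<beta>/2) ((1-\<beta>)/2))"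
  have e4: "e \<le> (1-\<beta>)/2" unfolding e_def by (rule min.coboundedI2, rule min.cobounded2)
  have e3: "e \<le> \<beta>/2" unfolding e_def by (rule min.coboundedI2, rule min.cobounded1)
  have e2: "e \<le> \<epsilon>" unfolding e_def by (rule min.cobounded1)
  have e1: "0 < e" using assms a0 a1 b0 b1 unfolding e_def by auto
  note e = e1 e2 e3 e4
  define M where "M = max (Phi (\<beta> - e)) (Phi (\<beta> + e))"
  have m1: "Phi (\<beta> - e) < Phi \<beta>" using Phi_inc[of "\<beta> - e" \<beta>] e by simp
  have m2: "Phi (\<beta> + e) < Phi \<beta>" using Phi_dec[of \<beta> "\<beta> + e"] e by simp
  have "M < Phi \<beta>" using m1 m2 by (simp add: M_def)
  moreover have bnd: "Phi b \<le> M" if h: "0 < b" "b \<le> 1" "\<epsilon> \<le> \<bar>b - \<beta>\<bar>" for b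
  proof -
    consider "b \<le> \<beta> - e" | "\<beta> + e \<le> b" using h e by linarith
    then show ?thesis
    proof cases
      case 1
      have "Phi b \<le> Phi (\<beta> - e)" using Phi_inc[of b "\<beta> - e"] 1 h e by (cases "b = \<beta> - e") auto
      then show ?thesis by (simp add: M_def)
    next
      case 2
      have "Phi b \<le> Phi (\<beta> + e)" using Phi_dec[of "\<beta> + e" b] 2 h e by (cases "b = \<beta> + e") auto
      then show ?thesis by (simp add: M_def)
    qed
  qed
  ultimately show ?thesis by (intro exI[of _ "Phi \<beta> - M"]) force
qed

end

lemma alg2a:
  fixes n a b d c x :: real
  assumes "n \<noteq> 0" "a \<noteq> 0" "b \<noteq> 0" "d \<noteq> 0" "x + b = a"
  shows "c * x / (n * a * b * d) + c / (n * a * d) = c / (n * b * d)"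
proof -
  have "c * x / (n * a * b * d) + c / (n * a * d) = (c * x + c * b) / (n * a * b * d)"
    using assms by (simp add: add_divide_distrib)
  also have "c * x + c * b = c * a" using assms(5) by (simp add: algebra_simps flip: assms(5))
  also have "c * a / (n * a * b * d) = c / (n * b * d)" using assms by simp
  finally show ?thesis .
qed
lemma alg2:
  fixes k n c :: real
  assumes "n \<noteq> 0" "n - 1 \<noteq> 0" "k - 1 \<noteq> 0" "k - 2 \<noteq> 0"
  shows "(1 - k/n) * (c * (n - k) / (n * (n-1) * (k-1) * (k-2)) + c / (n * (n-1) * (k-2)))
     = c / n^2 * ((n - k) / ((k-1) * (k-2)))"
proof -
  have "c * (n - k) / (n * (n-1) * (k-1) * (k-2)) + c / (n * (n-1) * (k-2)) = c / (n * (k-1) * (k-2))"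
    by (rule alg2a) (use assms in simp_all)
  moreover have "1 - k/n = (n-k)/n" using assms by (simp add: field_simps)
  ultimately show ?thesis using assms by (simp add: power2_eq_square mult_ac)
qed

lemma E_zero: "E_pdc n 0 s = 0"
  unfolding E_pdc_def P_pd_def by (intro sum.neutral) simp

lemma E_split:
  assumes n3: "3 \<le> n" and r1: "1 \<le> r" and rs: "r \<le> s" and sn: "s < n"
  shows "E_pdc n r s =
    real r / (real n ^ 2 * (real n - 1)) * (\<Sum>k\<in>{r+1..<s}. (real n - real k)^2 / (real k - 1))
    + real r * (real s - 1) / real n ^ 2 *
      (\<Sum>k = max (max s (r+1)) 3..n. (real n - real k) / ((real k - 1) * (real k - 2)))"
proof -
  define f where "f k = (1 - real k / real n) * P_pd n r s k" for k
  have nz: "real n \<noteq> 0" "real n - 1 \<noteq> 0" using n3 by simp_all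
  have U: "{r+1..n} = {r+1..<s} \<union> {max s (r+1)..n}" using sn by auto
  have D: "{r+1..<s} \<inter> {max s (r+1)..n} = {}" by auto
  have E1: "E_pdc n r s = sum f {r+1..<s} + sum f {max s (r+1)..n}"
    unfolding E_pdc_def f_def[abs_def] U by (rule sum.union_disjoint) (use D in auto)
  have F1: "sum f {r+1..<s} = real r / (real n ^ 2 * (real n - 1)) * (\<Sum>k\<in>{r+1..<s}. (real n - real k)^2 / (real k - 1))"
    unfolding sum_distrib_left
  proof (rule sum.cong[OF refl])
    fix k assume k: "k \<in> {r+1..<s}"
    then have k1: "real k - 1 \<noteq> 0" using r1 by simp
    have "k < s" using k by simp
    then show "f k = real r / (real n ^ 2 * (real n - 1)) * ((real n - real k)^2 / (real k - 1))"
      unfolding f_def P_pd_def using nz k1 by (simp add: field_simps power2_eq_square)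
  qed
  have F2a: "sum f {max s (r+1)..n} = sum f {max (max s (r+1)) 3..n}"
  proof (rule sum.mono_neutral_right)
    show "\<forall>i\<in>{max s (r + 1)..n} - {max (max s (r + 1)) 3..n}. f i = 0"
    proof
      fix i assume i: "i \<in> {max s (r + 1)..n} - {max (max s (r + 1)) 3..n}"
      then have "i = 2" using r1 by auto
      moreover have "\<not> i < s" using i by auto
      ultimately show "f i = 0" unfolding f_def P_pd_def by simp
    qed
  qed auto
  have F2: "sum f {max (max s (r+1)) 3..n} = real r * (real s - 1) / real n ^ 2 *
      (\<Sum>k = max (max s (r+1)) 3..n. (real n - real k) / ((real k - 1) * (real k - 2)))"
    unfolding sum_distrib_left
  proof (rule sum.cong[OF refl])
    fix k assume k: "k \<in> {max (max s (r+1)) 3..n}"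
    then have k1: "real k - 1 \<noteq> 0" "real k - 2 \<noteq> 0" by auto
    have "\<not> k < s" using k by simp
    then show "f k = real r * (real s - 1) / real n ^ 2 * ((real n - real k) / ((real k - 1) * (real k - 2)))"
      unfolding f_def P_pd_def using alg2[OF nz k1, of "real r * (real s - 1)"] by (simp add: mult_ac)
  qed
  show ?thesis using E1 F1 F2a F2 by simp
qed

lemma Bbound:
  assumes "3 \<le> m" "m \<le> n"
  shows "(\<Sum>k = m..n. (real n - real k) / ((real k - 1) * (real k - 2))) \<le> psi ((real m - 2) / (real n - 1))"
proof -
  have h: "ln ((real (n-2) + 1) / (real (m-3) + 1)) \<le> Hs (n-2) - Hs (m-3)"
    using Hs_low[of "m-3" "n-2"] assms by simp
  have e1: "real (n-2) + 1 = real n - 1" "real (m-3) + 1 = real m - 2" using assms by auto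
  have p: "real m - 2 > 0" "real n - 1 > 0" using assms by auto
  have l: "ln ((real m - 2) / (real n - 1)) = - ln ((real n - 1) / (real m - 2))"
    using p by (simp add: ln_div)
  show ?thesis unfolding sumB[OF assms] psi_def l using h e1 p by simp
qed

lemma dist_lem:
  fixes X c nn :: real
  assumes "0 \<le> X" "X \<le> nn" "0 \<le> c" "c \<le> 2" "2 \<le> nn"
  shows "\<bar>(X - c) / (nn - 1) - X / nn\<bar> \<le> 2 / (nn - 1)"
proof -
  have e: "(X - c) / (nn - 1) - X / nn = (X - c * nn) / (nn * (nn - 1))"
    using assms by (simp add: field_simps)
  have "c * nn \<le> 2 * nn" using assms by (intro mult_right_mono) auto
  moreover have "0 \<le> c * nn" using assms by simp
  ultimately have "\<bar>X - c * nn\<bar> \<le> 2 * nn" unfolding abs_le_iff using assms by linarith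
  then have "\<bar>X - c * nn\<bar> / (nn * (nn - 1)) \<le> 2 * nn / (nn * (nn - 1))"
    using assms by (intro divide_right_mono) auto
  also have "\<dots> = 2 / (nn - 1)" using assms by simp
  finally show ?thesis unfolding e using assms by (simp add: abs_div)
qed

lemma algA:
  fixes nn N R S L Q :: real
  assumes N: "N = nn - 1" "2 \<le> N" and R: "1 \<le> R" "R \<le> S - 2" "S \<le> N"
    and Q: "Q = L - 2*((S-2)/N - R/N) + (((S-2)/N)^2 - (R/N)^2)/2" "0 \<le> Q"
  shows "R / (nn^2 * N) * (N^2 * (1/R + L) - 2*N*((S-2) - R + 1) + ((S-2)*((S-2)+1) - (R-1)*R)/2)
     \<le> 1/nn + (R/N) * Q"
proof -
  have nz: "N \<noteq> 0" "nn \<noteq> 0" "R \<noteq> 0" using N R by auto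
  have id: "R / (nn^2 * N) * (N^2 * (1/R + L) - 2*N*((S-2) - R + 1) + ((S-2)*((S-2)+1) - (R-1)*R)/2)
     = N/nn^2 + (R*N/nn^2) * Q + (R*N/nn^2) * (-2/N + (S-2+R)/(2*N^2))"
    unfolding Q(1) using nz by (simp add: field_simps power2_eq_square)
  have t1: "N/nn^2 \<le> 1/nn" using N by (simp add: field_simps power2_eq_square)
  have c: "R*N/nn^2 \<le> R/N"
  proof -
    have "N * N \<le> nn * nn" using N by (intro mult_mono) auto
    then have "N * N \<le> nn^2" by (simp add: power2_eq_square)
    then have f: "N*N/nn^2 \<le> 1" using N by simp
    have e: "R*N/nn^2 = R/N * (N*N/nn^2)" using nz by (simp add: field_simps)
    have "R/N * (N*N/nn^2) \<le> R/N * 1" using f N R by (intro mult_left_mono) auto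
    then show ?thesis unfolding e by simp
  qed
  have t2: "(R*N/nn^2) * Q \<le> (R/N) * Q" using mult_right_mono[OF c Q(2)] .
  have t3a: "-2/N + (S-2+R)/(2*N^2) \<le> 0"
  proof -
    have "(S-2+R)/(2*N^2) \<le> (2*N)/(2*N^2)" using N R by (intro divide_right_mono) auto
    also have "\<dots> = 1/N" using nz by (simp add: power2_eq_square)
    also have "1/N \<le> 2/N" using N by (intro divide_right_mono) auto
    finally show ?thesis by simp
  qed
  have "0 \<le> R*N/nn^2" using N R by simp
  then have t3: "(R*N/nn^2) * (-2/N + (S-2+R)/(2*N^2)) \<le> 0" using mult_nonneg_nonpos[OF _ t3a] by blast
  show ?thesis unfolding id using t1 t2 t3 by linarith
qed

lemma algB1:
  fixes nn N R S Bs :: real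
  assumes N: "N = nn - 1" "2 \<le> N" and R: "1 \<le> R" "R \<le> S - 2" "S \<le> N"
    and B: "Bs \<le> psi ((S-2)/N)"
  shows "R * (S - 1) / nn^2 * Bs \<le> (R/N) * hh ((S-2)/N) + 1/N"
proof -
  define y where "y = (S-2)/N"
  have y: "0 < y" "y \<le> 1" using N R by (auto simp: y_def)
  have nz: "N \<noteq> 0" using N by simp
  have ps: "0 \<le> psi y" "psi y \<le> 1/y" using psi_nonneg psi_le y by auto
  have c0: "0 \<le> R * (S - 1) / nn^2" using N R by simp
  have "R * (S - 1) / nn^2 * Bs \<le> R * (S - 1) / nn^2 * psi y" using mult_left_mono[OF B c0] by (simp add: y_def)
  also have "\<dots> \<le> R * (S - 1) / N^2 * psi y"
  proof -
    have "N^2 \<le> nn^2" using N by (simp add: power_mono)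
    then have "R * (S - 1) / nn^2 \<le> R * (S - 1) / N^2" using N R by (intro divide_left_mono) auto
    then show ?thesis using mult_right_mono[OF _ ps(1)] by blast
  qed
  also have "\<dots> = (R/N) * (y * psi y) + (R/N) * psi y / N"
    unfolding y_def using nz by (simp add: field_simps power2_eq_square)
  also have "(R/N) * psi y / N \<le> (R/N) * (1/y) / N"
    using ps N R by (intro divide_right_mono mult_left_mono) auto
  also have "(R/N) * (1/y) / N = R / (S-2) / N" unfolding y_def using nz by simp
  also have "R / (S-2) / N \<le> 1 / N" using N R by (intro divide_right_mono) auto
  finally show ?thesis using hh_psi[of y] y unfolding y_def[symmetric] by simp
qed

lemma algB2:
  fixes nn N R S Bs :: real
  assumes N: "N = nn - 1" "2 \<le> N" and R: "2 \<le> R" "S = R + 1" "S \<le> N"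
    and B: "Bs \<le> psi ((S-2)/N)"
  shows "R * (S - 1) / nn^2 * Bs \<le> ((S-2)/N) * hh ((S-2)/N) + 3/N"
proof -
  define y where "y = (S-2)/N"
  have y: "0 < y" "y \<le> 1" using N R by (auto simp: y_def)
  have nz: "N \<noteq> 0" using N by simp
  have ps: "0 \<le> psi y" "psi y \<le> 1/y" using psi_nonneg psi_le y by auto
  have c0: "0 \<le> R * (S - 1) / nn^2" using N R by simp
  have "R * (S - 1) / nn^2 * Bs \<le> R * (S - 1) / nn^2 * psi y" using mult_left_mono[OF B c0] by (simp add: y_def)
  also have "\<dots> \<le> R * (S - 1) / N^2 * psi y"
  proof -
    have "N^2 \<le> nn^2" using N by (simp add: power_mono)
    then have "R * (S - 1) / nn^2 \<le> R * (S - 1) / N^2" using N R by (intro divide_left_mono) auto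
    then show ?thesis using mult_right_mono[OF _ ps(1)] by blast
  qed
  also have "\<dots> = y * (y * psi y) + 2 * (y * psi y) / N + psi y / N^2"
    unfolding y_def using nz R by (simp add: field_simps power2_eq_square)
  also have "2 * (y * psi y) / N \<le> 2 * 1 / N"
    using hh_le1[of y] hh_psi[of y] y N by (intro divide_right_mono mult_left_mono) auto
  also have "psi y / N^2 \<le> (1/y) / N^2" using ps N by (intro divide_right_mono) auto
  also have "(1/y) / N^2 = 1 / ((R - 1) * N)" unfolding y_def using nz R by (simp add: power2_eq_square)
  also have "1 / ((R - 1) * N) \<le> 1 / N" using R N by (intro divide_left_mono) (auto simp: mult_le_cancel_right1)
  finally show ?thesis using hh_psi[of y] y unfolding y_def[symmetric] by simp
qed

lemma algB3:
  fixes nn N R S Bs :: real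
  assumes N: "N = nn - 1" "2 \<le> N" and R: "3 \<le> S" "R = S" "S \<le> N"
    and B: "Bs \<le> psi ((S-1)/N)"
  shows "R * (S - 1) / nn^2 * Bs \<le> ((S-1)/N) * hh ((S-1)/N) + 1/N"
proof -
  define y where "y = (S-1)/N"
  have y: "0 < y" "y \<le> 1" using N R by (auto simp: y_def)
  have nz: "N \<noteq> 0" using N by simp
  have ps: "0 \<le> psi y" "psi y \<le> 1/y" using psi_nonneg psi_le y by auto
  have c0: "0 \<le> R * (S - 1) / nn^2" using N R by simp
  have "R * (S - 1) / nn^2 * Bs \<le> R * (S - 1) / nn^2 * psi y" using mult_left_mono[OF B c0] by (simp add: y_def)
  also have "\<dots> \<le> R * (S - 1) / N^2 * psi y"
  proof -
    have "N^2 \<le> nn^2" using N by (simp add: power_mono)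
    then have "R * (S - 1) / nn^2 \<le> R * (S - 1) / N^2" using N R by (intro divide_left_mono) auto
    then show ?thesis using mult_right_mono[OF _ ps(1)] by blast
  qed
  also have "\<dots> = y * (y * psi y) + (y * psi y) / N"
    unfolding y_def using nz R by (simp add: field_simps power2_eq_square)
  also have "(y * psi y) / N \<le> 1 / N"
    using hh_le1[of y] hh_psi[of y] y N by (intro divide_right_mono) auto
  finally show ?thesis using hh_psi[of y] y unfolding y_def[symmetric] by simp
qed

lemma upper:
  assumes n3: "3 \<le> n" and rs: "r \<le> s" and sn: "s < n"
  shows "\<exists>a b. 0 \<le> a \<and> a \<le> b \<and> b \<le> 1 \<and> \<bar>a - real r / real n\<bar> \<le> 2 / (real n - 1)
     \<and> \<bar>b - real s / real n\<bar> \<le> 2 / (real n - 1) \<and> E_pdc n r s \<le> FF a b + 3 / (real n - 1)"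
proof -
  define nn where "nn = real n"
  define N where "N = nn - 1"
  define R where "R = real r"
  define S where "S = real s"
  have N: "N = nn - 1" "2 \<le> N" using n3 by (auto simp: N_def nn_def)
  have SN: "S \<le> N" using sn by (simp add: N_def nn_def S_def)
  have RS: "R \<le> S" using rs by (simp add: R_def S_def)
  have R0: "0 \<le> R" by (simp add: R_def)
  have nnN: "N < nn" "0 < nn" using N by auto
  have Rnn: "R \<le> nn" "S \<le> nn" using RS SN nnN by auto
  have dl: "\<bar>(X - c) / N - X / nn\<bar> \<le> 2 / N" if "0 \<le> X" "X \<le> nn" "0 \<le> c" "c \<le> 2" for X c
    using dist_lem[of X nn c] that N by simp
  show ?thesis
  proof (cases "r = 0")
    case True
    have "real s / real n \<le> 1" using sn by simp
    moreover have "0 \<le> 3 / (real n - 1)" using n3 by simp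
    ultimately show ?thesis
      by (intro exI[of _ 0] exI[of _ "real s / real n"]) (simp add: True E_zero FF_def)
  next
    case False
    then have r1: "1 \<le> r" by simp
    define As where "As = (\<Sum>k\<in>{r+1..<s}. (real n - real k)^2 / (real k - 1))"
    define m where "m = max (max s (r+1)) 3"
    define Bs where "Bs = (\<Sum>k = m..n. (real n - real k) / ((real k - 1) * (real k - 2)))"
    have E: "E_pdc n r s = R / (nn^2 * N) * As + R * (S - 1) / nn^2 * Bs"
      using E_split[OF n3 r1 rs sn] unfolding As_def Bs_def m_def R_def S_def N_def nn_def .
    have m3: "3 \<le> m" "m \<le> n" using sn n3 r1 rs by (auto simp: m_def)
    have Bb: "Bs \<le> psi ((real m - 2) / N)" unfolding Bs_def N_def nn_def by (rule Bbound[OF m3])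
    consider (small) "s \<le> 2" | (big2) "r + 2 \<le> s" "3 \<le> s" | (one) "s = r + 1" "3 \<le> s"
      | (eq) "s = r" "3 \<le> s" using rs by linarith
    then show ?thesis
    proof cases
      case small
      have As0: "As = 0" unfolding As_def using small r1 by simp
      have m_3: "m = 3" using small r1 rs by (simp add: m_def)
      have u: "0 < 1/N" "1/N \<le> 1" using N by auto
      have "psi (1/N) \<le> 1/(1/N)" by (rule psi_le[OF u])
      then have BN: "Bs \<le> N" using Bb m_3 by simp
      have c0: "0 \<le> R * (S - 1) / nn^2" using RS r1 by (simp add: R_def)
      have c2: "R * (S - 1) \<le> 2" using small r1 rs
      proof -
        have "R \<le> 2" "S - 1 \<le> 1" "0 \<le> S - 1" using small r1 rs by (auto simp: R_def S_def)
        moreover have "R * (S - 1) \<le> R * 1" using R0 \<open>S - 1 \<le> 1\<close> by (intro mult_left_mono) auto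
        ultimately show ?thesis by simp
      qed
      have "E_pdc n r s = R * (S - 1) / nn^2 * Bs" unfolding E As0 by simp
      also have "\<dots> \<le> R * (S - 1) / nn^2 * N" using mult_left_mono[OF BN c0] .
      also have "\<dots> \<le> 2 / nn^2 * N" using c2 N by (intro mult_right_mono divide_right_mono) auto
      also have "\<dots> \<le> 2 / nn^2 * nn" using N nnN by (intro mult_left_mono) auto
      also have "\<dots> = 2 / nn" using nnN by (simp add: power2_eq_square)
      also have "\<dots> \<le> 3 / N" using nnN N by (simp add: frac_le)
      finally have Eb: "E_pdc n r s \<le> 3 / N" .
      have d1: "R / nn \<le> 2 / N" using small rs nnN N by (intro frac_le) (auto simp: R_def)
      have d2: "S / nn \<le> 2 / N" using small rs nnN N by (intro frac_le) (auto simp: S_def)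
      show ?thesis
        by (intro exI[of _ 0] exI[of _ 0]) (use Eb d1 d2 R0 in \<open>simp add: FF_def R_def S_def N_def nn_def\<close>)
    next
      case big2
      define x where "x = R / N"
      define y where "y = (S - 2) / N"
      have x0: "0 < x" using r1 N by (simp add: x_def R_def)
      have xy: "x \<le> y" using big2 N by (simp add: x_def y_def R_def S_def divide_right_mono)
      have y1: "y \<le> 1" using SN N by (simp add: y_def)
      have set: "{r+1..<s} = {r+1..(s-2)+1}" using big2 by auto
      have rs2: "r \<le> s - 2" using big2 by simp
      have AsE: "As = N^2 * (Hs (s-2) - Hs (r-1)) - 2 * N * ((S-2) - R + 1) + ((S-2)*((S-2)+1) - (R-1)*R)/2"
        unfolding As_def set sumA[OF r1 rs2] using big2 by (simp add: N_def nn_def R_def S_def of_nat_diff)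
      define L where "L = ln ((S-2)/R)"
      have Hr: "Hs r = Hs (r-1) + 1/R"
        using Hs_Suc[of "r-1"] r1 by (simp add: R_def)
      have Hup: "Hs (s-2) - Hs r \<le> L" using Hs_up[OF r1 rs2] big2 by (simp add: L_def R_def S_def of_nat_diff)
      have As_le: "As \<le> N^2 * (1/R + L) - 2 * N * ((S-2) - R + 1) + ((S-2)*((S-2)+1) - (R-1)*R)/2"
      proof -
        have "Hs (s-2) - Hs (r-1) \<le> 1/R + L" using Hr Hup by simp
        then have "N^2 * (Hs (s-2) - Hs (r-1)) \<le> N^2 * (1/R + L)" by (intro mult_left_mono) auto
        then show ?thesis unfolding AsE by simp
      qed
      have Q: "phi y - phi x = L - 2*((S-2)/N - R/N) + (((S-2)/N)^2 - (R/N)^2)/2"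
      proof -
        have y0: "0 < y" using x0 xy by simp
        have yx: "y / x = (S-2)/R" using N r1 by (simp add: x_def y_def R_def)
        have "ln (y / x) = ln y - ln x" using x0 y0 by (simp add: ln_div)
        then have "ln y - ln x = L" unfolding L_def yx by simp
        then show ?thesis unfolding phi_def x_def[symmetric] y_def[symmetric] by (simp add: diff_divide_distrib)
      qed
      have Q0: "0 \<le> phi y - phi x" using phi_mono[OF x0 xy] by simp
      have c0: "0 \<le> R / (nn^2 * N)" using R0 N by simp
      have A: "R / (nn^2 * N) * As \<le> 1/nn + (R/N) * (phi y - phi x)"
        using mult_left_mono[OF As_le c0] algA[OF N _ _ SN Q Q0] r1 big2
        by (simp add: R_def S_def)
      have B: "R * (S - 1) / nn^2 * Bs \<le> (R/N) * hh ((S-2)/N) + 1/N"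
        using algB1[OF N _ _ SN, of R Bs] Bb r1 big2 by (simp add: m_def R_def S_def)
      have "E_pdc n r s \<le> FF x y + (1/nn + 1/N)"
        unfolding E FF_def Phi_split using A B by (simp add: x_def[symmetric] y_def[symmetric] algebra_simps)
      also have "1/nn + 1/N \<le> 3/N"
      proof -
        have "1/nn \<le> 1/N" using nnN N by (intro frac_le) auto
        moreover have "1/N + 1/N \<le> 3/N" using N by (simp add: field_simps)
        ultimately show ?thesis by simp
      qed
      finally have Eb: "E_pdc n r s \<le> FF x y + 3/N" by simp
      have d1: "\<bar>x - R / nn\<bar> \<le> 2 / N" using dl[of R 0] R0 Rnn by (simp add: x_def)
      have d2: "\<bar>y - S / nn\<bar> \<le> 2 / N" using dl[of S 2] SN RS R0 nnN Rnn by (simp add: y_def)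
      show ?thesis
        by (intro exI[of _ x] exI[of _ y]) (use Eb d1 d2 x0 xy y1 in \<open>simp add: R_def S_def N_def nn_def\<close>)
    next
      case one
      define y where "y = (S - 2) / N"
      have y0: "0 < y" using one N by (simp add: y_def S_def)
      have y1: "y \<le> 1" using SN N by (simp add: y_def)
      have As0: "As = 0" unfolding As_def using one by simp
      have ms: "m = s" using one by (simp add: m_def)
      have B: "R * (S - 1) / nn^2 * Bs \<le> y * hh y + 3/N"
        using algB2[OF N _ _ SN, of R Bs] Bb one by (simp add: ms R_def S_def y_def)
      have Eb: "E_pdc n r s \<le> FF y y + 3/N"
        unfolding E As0 FF_def Phi_split using B by simp
      have d1: "\<bar>y - R / nn\<bar> \<le> 2 / N" using dl[of R 1] one SN R0 RS nnN Rnn by (simp add: y_def S_def R_def)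
      have d2: "\<bar>y - S / nn\<bar> \<le> 2 / N" using dl[of S 2] SN RS R0 nnN Rnn by (simp add: y_def)
      show ?thesis
        by (intro exI[of _ y] exI[of _ y]) (use Eb d1 d2 y0 y1 in \<open>simp add: R_def S_def N_def nn_def\<close>)
    next
      case eq
      define y where "y = (S - 1) / N"
      have y0: "0 < y" using eq N by (simp add: y_def S_def)
      have y1: "y \<le> 1" using SN N by (simp add: y_def)
      have As0: "As = 0" unfolding As_def using eq by simp
      have ms: "m = r + 1" using eq by (simp add: m_def)
      have B: "R * (S - 1) / nn^2 * Bs \<le> y * hh y + 1/N"
        using algB3[OF N _ _ SN, of R Bs] Bb eq by (simp add: ms R_def S_def y_def)
      have Eb: "E_pdc n r s \<le> FF y y + 1/N"
        unfolding E As0 FF_def Phi_split using B by simp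
      have "1/N \<le> 3/N" using N by (simp add: frac_le)
      then have Eb': "E_pdc n r s \<le> FF y y + 3/N" using Eb by simp
      have d1: "\<bar>y - R / nn\<bar> \<le> 2 / N" using dl[of R 1] eq SN R0 RS nnN Rnn by (simp add: y_def S_def R_def)
      have d2: "\<bar>y - S / nn\<bar> \<le> 2 / N" using dl[of S 1] SN RS R0 nnN Rnn by (simp add: y_def)
      show ?thesis
        by (intro exI[of _ y] exI[of _ y]) (use Eb' d1 d2 y0 y1 in \<open>simp add: R_def S_def N_def nn_def\<close>)
    qed
  qed
qed

definition GA :: "real \<Rightarrow> real \<Rightarrow> real \<Rightarrow> real" where
  "GA a b e = a*(1-e)*ln((b-e)/a) - 2*a*(b - e - a) + a/(1-e)*(((b-2*e)*(b-e) - (a-e)*a)/2)"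
definition GB :: "real \<Rightarrow> real \<Rightarrow> real \<Rightarrow> real" where
  "GB a b e = a*(b-e)*((1-e)/(b-2*e) - 1 - ln((1-2*e)/(b-3*e)))"

lemma lower:
  assumes n3: "3 \<le> n" and r1: "1 \<le> r" and rs: "r + 2 \<le> s" and s4: "4 \<le> s" and sn: "s < n"
  shows "GA (real r / real n) (real s / real n) (1 / real n) + GB (real r / real n) (real s / real n) (1 / real n)
     \<le> E_pdc n r s"
proof -
  define nn where "nn = real n"
  define N where "N = nn - 1"
  define R where "R = real r"
  define S where "S = real s"
  have N: "N = nn - 1" "2 \<le> N" using n3 by (auto simp: N_def nn_def)
  have SN: "S \<le> N" using sn by (simp add: N_def nn_def S_def)
  have R1: "1 \<le> R" using r1 by (simp add: R_def)
  have RS: "R + 2 \<le> S" using rs by (simp add: R_def S_def)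
  have S4: "4 \<le> S" using s4 by (simp add: S_def)
  have nnN: "N < nn" "0 < nn" using N by auto
  define As where "As = (\<Sum>k\<in>{r+1..<s}. (real n - real k)^2 / (real k - 1))"
  define Bs where "Bs = (\<Sum>k = s..n. (real n - real k) / ((real k - 1) * (real k - 2)))"
  have ms: "max (max s (r+1)) 3 = s" using rs s4 by simp
  have E: "E_pdc n r s = R / (nn^2 * N) * As + R * (S - 1) / nn^2 * Bs"
    using E_split[OF n3 r1 _ sn] rs unfolding As_def Bs_def ms R_def S_def N_def nn_def by simp
  have set: "{r+1..<s} = {r+1..(s-2)+1}" using rs by auto
  have rs2: "r \<le> s - 2" using rs by simp
  have AsE: "As = N^2 * (Hs (s-2) - Hs (r-1)) - 2 * N * ((S-2) - R + 1) + ((S-2)*((S-2)+1) - (R-1)*R)/2"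
    unfolding As_def set sumA[OF r1 rs2] using rs by (simp add: N_def nn_def R_def S_def of_nat_diff)
  have Hl: "ln ((S-1)/R) \<le> Hs (s-2) - Hs (r-1)"
    using Hs_low[of "r-1" "s-2"] rs r1 by (simp add: R_def S_def of_nat_diff)
  have As_ge: "N^2 * ln ((S-1)/R) - 2 * N * ((S-2) - R + 1) + ((S-2)*((S-2)+1) - (R-1)*R)/2 \<le> As"
  proof -
    have "N^2 * ln ((S-1)/R) \<le> N^2 * (Hs (s-2) - Hs (r-1))" using Hl by (intro mult_left_mono) auto
    then show ?thesis unfolding AsE by simp
  qed
  have BsE: "Bs = N / (S - 2) - 1 - (Hs (n-2) - Hs (s-3))"
    unfolding Bs_def using sumB[of s n] s4 sn by (simp add: N_def nn_def S_def)
  have Hu: "Hs (n-2) - Hs (s-3) \<le> ln ((nn - 2)/(S - 3))"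
    using Hs_up[of "s-3" "n-2"] s4 sn by (simp add: nn_def S_def of_nat_diff)
  have Bs_ge: "N / (S - 2) - 1 - ln ((nn - 2)/(S - 3)) \<le> Bs" unfolding BsE using Hu by simp
  have c1: "0 \<le> R / (nn^2 * N)" using R1 N by simp
  have c2: "0 \<le> R * (S - 1) / nn^2" using R1 S4 by simp
  have A: "R / (nn^2 * N) * (N^2 * ln ((S-1)/R) - 2 * N * ((S-2) - R + 1) + ((S-2)*((S-2)+1) - (R-1)*R)/2)
     \<le> R / (nn^2 * N) * As" using mult_left_mono[OF As_ge c1] .
  have B: "R * (S - 1) / nn^2 * (N / (S - 2) - 1 - ln ((nn - 2)/(S - 3))) \<le> R * (S - 1) / nn^2 * Bs"
    using mult_left_mono[OF Bs_ge c2] .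
  have nz: "nn \<noteq> 0" "N \<noteq> 0" "R \<noteq> 0" "S - 2 \<noteq> 0" "S - 3 \<noteq> 0" using N R1 S4 by auto
  have l1: "(S/nn - 1/nn) / (R/nn) = (S-1)/R" using nz by (simp add: field_simps)
  have l2: "(1 - 2*(1/nn)) / (S/nn - 3*(1/nn)) = (nn - 2)/(S - 3)" using nz by (simp add: field_simps)
  define LA where "LA = ln ((S-1)/R)"
  define LB where "LB = ln ((nn - 2)/(S - 3))"
  have nn1: "nn - 1 \<noteq> 0" using N by simp
  have GAe: "GA (R/nn) (S/nn) (1/nn) = R / (nn^2 * N) * (N^2 * ln ((S-1)/R) - 2 * N * ((S-2) - R + 1) + ((S-2)*((S-2)+1) - (R-1)*R)/2)"
  proof -
    have "GA (R/nn) (S/nn) (1/nn) = R/nn*(1-1/nn)*LA - 2*(R/nn)*(S/nn - 1/nn - R/nn) + (R/nn)/(1-1/nn)*(((S/nn-2*(1/nn))*(S/nn-1/nn) - (R/nn-1/nn)*(R/nn))/2)"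
      unfolding GA_def l1 LA_def ..
    also have "\<dots> = R / (nn^2 * (nn - 1)) * ((nn - 1)^2 * LA - 2 * (nn - 1) * ((S-2) - R + 1) + ((S-2)*((S-2)+1) - (R-1)*R)/2)"
      using nz nn1 by (simp add: field_simps power2_eq_square)
    finally show ?thesis unfolding LA_def N(1) .
  qed
  have GBe: "GB (R/nn) (S/nn) (1/nn) = R * (S - 1) / nn^2 * (N / (S - 2) - 1 - ln ((nn - 2)/(S - 3)))"
  proof -
    have "GB (R/nn) (S/nn) (1/nn) = R/nn*(S/nn-1/nn)*((1-1/nn)/(S/nn-2*(1/nn)) - 1 - LB)"
      unfolding GB_def l2 LB_def by simp
    also have "\<dots> = R * (S - 1) / nn^2 * ((nn - 1) / (S - 2) - 1 - LB)"
      using nz nn1 by (simp add: field_simps power2_eq_square)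
    finally show ?thesis unfolding LB_def N(1) .
  qed
  show ?thesis using A B GAe GBe E unfolding R_def S_def nn_def by simp
qed

lemma c_over_lim:
  fixes c :: real assumes c: "0 \<le> c"
  shows "(\<lambda>n. c / (real n - 1)) \<longlonglongrightarrow> 0"
proof (rule tendsto_sandwich[where f = "\<lambda>n. 0" and h = "\<lambda>n. (2*c) * (1 / real n)"])
  show "eventually (\<lambda>n. 0 \<le> c / (real n - 1)) sequentially"
    using eventually_ge_at_top[of "2::nat"] by eventually_elim (use c in simp)
  show "eventually (\<lambda>n. c / (real n - 1) \<le> (2*c) * (1 / real n)) sequentially"
    using eventually_ge_at_top[of "2::nat"]
  proof eventually_elim
    case (elim n)
    have "c / (real n - 1) \<le> c / (real n / 2)" using elim c by (intro divide_left_mono) auto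
    then show ?case by (simp add: mult.commute)
  qed
  show "(\<lambda>n. (2*c) * (1 / real n)) \<longlonglongrightarrow> 0" using tendsto_mult_right_zero[OF lim_1_over_n] by simp
qed simp


lemma floor_nat_bounds:
  fixes x :: real assumes "0 \<le> x"
  shows "x - 1 < real (nat \<lfloor>x\<rfloor>)" "real (nat \<lfloor>x\<rfloor>) \<le> x"
proof -
  have f0: "0 \<le> \<lfloor>x\<rfloor>" using assms by simp
  have "real (nat \<lfloor>x\<rfloor>) = of_int \<lfloor>x\<rfloor>" using f0 by simp
  moreover have "x < of_int \<lfloor>x\<rfloor> + 1"
  proof (rule ccontr)
    assume "\<not> x < of_int \<lfloor>x\<rfloor> + 1"
    then have "of_int (\<lfloor>x\<rfloor> + 1) \<le> x" by simp
    then have "\<lfloor>x\<rfloor> + 1 \<le> \<lfloor>x\<rfloor>" by (simp only: le_floor_iff)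
    then show False by simp
  qed
  ultimately show "x - 1 < real (nat \<lfloor>x\<rfloor>)" "real (nat \<lfloor>x\<rfloor>) \<le> x" by simp_all
qed

theorem theorem9:
  fixes M1 M2 :: "nat \<Rightarrow> nat" and \<alpha> \<beta> :: real
  assumes maxim: "\<And>n. n > 2 \<Longrightarrow> admissible n (M1 n) (M2 n) \<and>
                    (\<forall>r s. admissible n r s \<longrightarrow> E_pdc n r s \<le> E_pdc n (M1 n) (M2 n))"
    and beta: "0 < \<beta>" "\<beta> < 1" "-2 + 1/\<beta> + \<beta> + ln \<beta> = 0"
    and alpha: "0 < \<alpha>" "\<alpha> < \<beta>"
      "1 - 1/\<beta> - 2*\<beta> - \<beta>^2/2 + 4*\<alpha> - 3*\<alpha>^2/2 - ln \<alpha> = 0"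
  shows "(\<lambda>n. real (M1 n) / real n) \<longlonglongrightarrow> \<alpha> \<and>
         (\<lambda>n. real (M2 n) / real n) \<longlonglongrightarrow> \<beta> \<and>
         (\<lambda>n. E_pdc n (M1 n) (M2 n)) \<longlonglongrightarrow>
           \<alpha>/2 * (2 - 6*\<beta> + \<beta>^2 + 4*\<alpha> - \<alpha>^2 + 2*(1+\<beta>)*ln \<beta> - 2*ln \<alpha>)"
proof -
  interpret abloc \<beta> \<alpha> using beta alpha by unfold_locales auto
  define Fmax where "Fmax = FF \<alpha> \<beta>"
  have FmaxPsi: "Fmax = Psi \<alpha>" unfolding Fmax_def FF_def Psi_def ..
  have target: "\<alpha>/2 * (2 - 6*\<beta> + \<beta>^2 + 4*\<alpha> - \<alpha>^2 + 2*(1+\<beta>)*ln \<beta> - 2*ln \<alpha>) = Fmax"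
    unfolding Fmax_def FF_def Phi_def phi_def by (simp add: algebra_simps power2_eq_square)
  define r where "r n = nat \<lfloor>\<alpha> * real n\<rfloor>" for n
  define s where "s n = nat \<lfloor>\<beta> * real n\<rfloor>" for n
  define a where "a n = real (r n) / real n" for n
  define b where "b n = real (s n) / real n" for n
  define e where "e n = 1 / real (n::nat)" for n
  have e_lim: "e \<longlonglongrightarrow> 0" unfolding e_def by (rule lim_1_over_n)
  have ab_lim: "a \<longlonglongrightarrow> \<alpha>" "b \<longlonglongrightarrow> \<beta>"
  proof -
    have g: "(\<lambda>n. c - e n) \<longlonglongrightarrow> c" for c :: real using tendsto_diff[OF tendsto_const e_lim] by simp
    have bnd: "c - e n \<le> real (nat \<lfloor>c * real n\<rfloor>) / real n \<and> real (nat \<lfloor>c * real n\<rfloor>) / real n \<le> c"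
      if "0 < c" "n \<ge> 1" for c :: real and n
    proof -
      have np: "real n > 0" using that by simp
      have "c * real n - 1 < real (nat \<lfloor>c * real n\<rfloor>)" "real (nat \<lfloor>c * real n\<rfloor>) \<le> c * real n"
        using floor_nat_bounds[of "c * real n"] that by auto
      then have X: "c * real n - 1 < real (nat \<lfloor>c * real n\<rfloor>)" "real (nat \<lfloor>c * real n\<rfloor>) \<le> c * real n" .
      have "(c * real n - 1) / real n < real (nat \<lfloor>c * real n\<rfloor>) / real n"
        using X(1) np by (rule divide_strict_right_mono)
      moreover have "(c * real n - 1) / real n = c - e n" using np unfolding e_def by (simp add: field_simps)
      moreover have "real (nat \<lfloor>c * real n\<rfloor>) / real n \<le> c * real n / real n"
        using X(2) np by (intro divide_right_mono) auto
      ultimately show ?thesis using np by simp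
    qed
    have ev1: "eventually (\<lambda>n. (n::nat) \<ge> 1) sequentially" by (rule eventually_ge_at_top)
    show "a \<longlonglongrightarrow> \<alpha>"
    proof (rule tendsto_sandwich[OF _ _ g tendsto_const])
      show "eventually (\<lambda>n. \<alpha> - e n \<le> a n) sequentially" using ev1
      proof eventually_elim
        case (elim n) show ?case using bnd[OF alpha(1) elim] unfolding a_def r_def by blast
      qed
      show "eventually (\<lambda>n. a n \<le> \<alpha>) sequentially" using ev1
      proof eventually_elim
        case (elim n) show ?case using bnd[OF alpha(1) elim] unfolding a_def r_def by blast
      qed
    qed
    show "b \<longlonglongrightarrow> \<beta>"
    proof (rule tendsto_sandwich[OF _ _ g tendsto_const])
      show "eventually (\<lambda>n. \<beta> - e n \<le> b n) sequentially" using ev1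
      proof eventually_elim
        case (elim n) show ?case using bnd[OF beta(1) elim] unfolding b_def s_def by blast
      qed
      show "eventually (\<lambda>n. b n \<le> \<beta>) sequentially" using ev1
      proof eventually_elim
        case (elim n) show ?case using bnd[OF beta(1) elim] unfolding b_def s_def by blast
      qed
    qed
  qed
  define L where "L n = GA (a n) (b n) (e n) + GB (a n) (b n) (e n)" for n
  have L_lim: "L \<longlonglongrightarrow> Fmax"
  proof -
    have t1: "(\<lambda>n. GA (a n) (b n) (e n)) \<longlonglongrightarrow> GA \<alpha> \<beta> 0"
      unfolding GA_def using ab_lim e_lim alpha beta
      by (auto intro!: tendsto_eq_intros)
    have t2: "(\<lambda>n. GB (a n) (b n) (e n)) \<longlonglongrightarrow> GB \<alpha> \<beta> 0"
      unfolding GB_def using ab_lim e_lim alpha beta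
      by (auto intro!: tendsto_eq_intros)
    have "L \<longlonglongrightarrow> GA \<alpha> \<beta> 0 + GB \<alpha> \<beta> 0"
      unfolding L_def by (rule tendsto_add[OF t1 t2])
    moreover have "GA \<alpha> \<beta> 0 + GB \<alpha> \<beta> 0 = Fmax"
    proof -
      have l1: "ln (\<beta> / \<alpha>) = ln \<beta> - ln \<alpha>" using alpha beta by (simp add: ln_div)
      have l2: "ln (1 / \<beta>) = - ln \<beta>" using beta by (simp add: ln_div)
      show ?thesis unfolding GA_def GB_def Fmax_def FF_def Phi_def phi_def
        using beta(1) by (simp add: l1 l2 field_simps power2_eq_square)
    qed
    ultimately show ?thesis by simp
  qed
  define K where "K = max 3 (max (1/\<alpha>) (max (3/(\<beta>-\<alpha>)) (4/\<beta>)))"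
  have evK: "eventually (\<lambda>n. K \<le> real n) sequentially"
    using filterlim_real_sequentially unfolding filterlim_at_top by blast
  have low: "eventually (\<lambda>n. L n \<le> E_pdc n (M1 n) (M2 n)) sequentially"
    using evK
  proof (rule eventually_mono)
    fix n assume nK: "K \<le> real n"
    have n3: "3 \<le> n" using nK unfolding K_def by simp
    have np: "0 < real n" using n3 by simp
    have an: "1 \<le> \<alpha> * real n" using nK alpha unfolding K_def by (simp add: field_simps)
    have ban: "3 \<le> (\<beta> - \<alpha>) * real n" using nK alpha unfolding K_def by (simp add: field_simps)
    have bn: "4 \<le> \<beta> * real n" using nK beta unfolding K_def by (simp add: field_simps)
    have rb: "\<alpha> * real n - 1 < real (r n)" "real (r n) \<le> \<alpha> * real n"
      unfolding r_def using floor_nat_bounds[of "\<alpha> * real n"] alpha np by auto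
    have sb: "\<beta> * real n - 1 < real (s n)" "real (s n) \<le> \<beta> * real n"
      unfolding s_def using floor_nat_bounds[of "\<beta> * real n"] beta np by auto
    have r1: "1 \<le> r n" using rb an by linarith
    have rs: "r n + 2 \<le> s n"
    proof -
      have "real (r n) + 2 < real (s n) + 1" using rb sb ban by (simp add: algebra_simps)
      then show ?thesis by linarith
    qed
    have s4: "4 \<le> s n"
    proof -
      have "3 < real (s n)" using sb bn by linarith
      then show ?thesis by linarith
    qed
    have sn: "s n < n"
    proof -
      have "\<beta> * real n < real n" using beta np by simp
      then show ?thesis using sb by linarith
    qed
    have adm: "admissible n (r n) (s n)" unfolding admissible_def using rs sn by simp
    have "L n \<le> E_pdc n (r n) (s n)"
      unfolding L_def a_def b_def e_def using lower[OF n3 r1 rs s4 sn] .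
    also have "\<dots> \<le> E_pdc n (M1 n) (M2 n)" using maxim[of n] n3 adm by auto
    finally show "L n \<le> E_pdc n (M1 n) (M2 n)" .
  qed
  have "\<forall>n. \<exists>x y. 3 \<le> n \<longrightarrow> (0 \<le> x \<and> x \<le> y \<and> y \<le> 1 \<and> \<bar>x - real (M1 n) / real n\<bar> \<le> 2 / (real n - 1)
     \<and> \<bar>y - real (M2 n) / real n\<bar> \<le> 2 / (real n - 1) \<and> E_pdc n (M1 n) (M2 n) \<le> FF x y + 3 / (real n - 1))"
  proof
    fix n
    show "\<exists>x y. 3 \<le> n \<longrightarrow> (0 \<le> x \<and> x \<le> y \<and> y \<le> 1 \<and> \<bar>x - real (M1 n) / real n\<bar> \<le> 2 / (real n - 1)
     \<and> \<bar>y - real (M2 n) / real n\<bar> \<le> 2 / (real n - 1) \<and> E_pdc n (M1 n) (M2 n) \<le> FF x y + 3 / (real n - 1))"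
    proof (cases "3 \<le> n")
      case True
      then have "admissible n (M1 n) (M2 n)" using maxim[of n] by simp
      then show ?thesis using upper[OF True, of "M1 n" "M2 n"] unfolding admissible_def by blast
    qed simp
  qed
  then obtain pa pb where P: "\<And>n. 3 \<le> n \<Longrightarrow> 0 \<le> pa n \<and> pa n \<le> pb n \<and> pb n \<le> 1 \<and> \<bar>pa n - real (M1 n) / real n\<bar> \<le> 2 / (real n - 1)
     \<and> \<bar>pb n - real (M2 n) / real n\<bar> \<le> 2 / (real n - 1) \<and> E_pdc n (M1 n) (M2 n) \<le> FF (pa n) (pb n) + 3 / (real n - 1)"
    by metis
  have ev3: "eventually (\<lambda>n. (n::nat) \<ge> 3) sequentially" by (rule eventually_ge_at_top)
  define d where "d n = 3 / (real n - 1)" for n :: nat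
  have d_lim: "d \<longlonglongrightarrow> 0" unfolding d_def by (rule c_over_lim) simp
  have d2_lim: "(\<lambda>n. 2 / (real n - 1)) \<longlonglongrightarrow> 0" by (rule c_over_lim) simp
  have FleM: "FF (pa n) (pb n) \<le> Fmax" if "3 \<le> n" for n
    using FF_le_max[of "pa n" "pb n"] P[OF that] FmaxPsi by simp
  have up: "eventually (\<lambda>n. E_pdc n (M1 n) (M2 n) \<le> Fmax + d n) sequentially"
    using ev3 by eventually_elim (use P FleM in \<open>force simp: d_def\<close>)
  have E_lim: "(\<lambda>n. E_pdc n (M1 n) (M2 n)) \<longlonglongrightarrow> Fmax"
    by (rule tendsto_sandwich[OF low up L_lim]) (use tendsto_add[OF tendsto_const d_lim] in simp)
  have F_lim: "(\<lambda>n. FF (pa n) (pb n)) \<longlonglongrightarrow> Fmax"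
  proof (rule tendsto_sandwich[where f = "\<lambda>n. L n - d n"])
    show "eventually (\<lambda>n. L n - d n \<le> FF (pa n) (pb n)) sequentially"
      using ev3 low by eventually_elim (use P in \<open>force simp: d_def\<close>)
    show "eventually (\<lambda>n. FF (pa n) (pb n) \<le> Fmax) sequentially"
      using ev3 by eventually_elim (use FleM in simp)
    show "(\<lambda>n. L n - d n) \<longlonglongrightarrow> Fmax" using tendsto_diff[OF L_lim d_lim] by simp
  qed simp
  have pa_lim: "pa \<longlonglongrightarrow> \<alpha>"
  proof (rule tendstoI)
    fix \<epsilon> :: real assume ep: "\<epsilon> > 0"
    obtain \<delta> where dl: "\<delta> > 0" "\<And>x y. 0 \<le> x \<and> x \<le> y \<and> y \<le> 1 \<and> \<epsilon> \<le> \<bar>x - \<alpha>\<bar> \<Longrightarrow> FF x y \<le> Psi \<alpha> - \<delta>"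
      using Key1[OF ep] by blast
    have "eventually (\<lambda>n. Fmax - \<delta> < FF (pa n) (pb n)) sequentially"
      using order_tendstoD(1)[OF F_lim] dl by simp
    then show "eventually (\<lambda>n. dist (pa n) \<alpha> < \<epsilon>) sequentially"
      using ev3
    proof eventually_elim
      case (elim n)
      show ?case
      proof (rule ccontr)
        assume "\<not> dist (pa n) \<alpha> < \<epsilon>"
        then have "\<epsilon> \<le> \<bar>pa n - \<alpha>\<bar>" by (simp add: dist_real_def)
        then have "FF (pa n) (pb n) \<le> Psi \<alpha> - \<delta>" using dl(2) P[OF elim(2)] by blast
        then show False using elim(1) FmaxPsi by simp
      qed
    qed
  qed
  have pb_lim: "pb \<longlonglongrightarrow> \<beta>"
  proof (rule tendstoI)
    fix \<epsilon> :: real assume ep: "\<epsilon> > 0"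
    obtain \<delta> where dl: "\<delta> > 0" "\<And>y. 0 < y \<and> y \<le> 1 \<and> \<epsilon> \<le> \<bar>y - \<beta>\<bar> \<Longrightarrow> Phi y \<le> Phi \<beta> - \<delta>"
      using Key2[OF ep] by blast
    have h1: "eventually (\<lambda>n. Fmax - \<alpha>/2 * \<delta> < FF (pa n) (pb n)) sequentially"
      using order_tendstoD(1)[OF F_lim] dl alpha by simp
    have h2: "eventually (\<lambda>n. \<alpha>/2 < pa n) sequentially"
      using order_tendstoD(1)[OF pa_lim, of "\<alpha>/2"] alpha by linarith
    have h3: "eventually (\<lambda>n. pa n < \<beta>) sequentially"
      using order_tendstoD(2)[OF pa_lim] alpha by simp
    show "eventually (\<lambda>n. dist (pb n) \<beta> < \<epsilon>) sequentially"
      using h1 h2 h3 ev3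
    proof eventually_elim
      case (elim n)
      show ?case
      proof (rule ccontr)
        assume "\<not> dist (pb n) \<beta> < \<epsilon>"
        then have ee: "\<epsilon> \<le> \<bar>pb n - \<beta>\<bar>" by (simp add: dist_real_def)
        have Pn: "0 \<le> pa n" "pa n \<le> pb n" "pb n \<le> 1" using P[OF elim(4)] by auto
        have pa0: "0 < pa n" using elim(2) alpha by simp
        have pb0: "0 < pb n" using pa0 Pn by simp
        have ph: "Phi \<beta> - Phi (pb n) \<ge> \<delta>" using dl(2)[of "pb n"] pb0 Pn ee by simp
        have e1: "FF (pa n) (pb n) = Psi (pa n) - pa n * (Phi \<beta> - Phi (pb n))"
          using C1(1)[OF pa0 pb0 Pn(3)] .
        have e2: "Psi (pa n) \<le> Psi \<alpha>" using Psi_le_max[of "pa n"] pa0 elim(3) by simp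
        have e3: "\<alpha>/2 * \<delta> \<le> pa n * (Phi \<beta> - Phi (pb n))"
          using elim(2) ph dl(1) alpha by (intro mult_mono) auto
        have "FF (pa n) (pb n) \<le> Psi \<alpha> - \<alpha>/2 * \<delta>" using e1 e2 e3 by linarith
        then show False using elim(1) FmaxPsi by simp
      qed
    qed
  qed
  have M1_lim: "(\<lambda>n. real (M1 n) / real n) \<longlonglongrightarrow> \<alpha>"
  proof (rule tendsto_sandwich[where f = "\<lambda>n. pa n - 2 / (real n - 1)" and h = "\<lambda>n. pa n + 2 / (real n - 1)"])
    show "eventually (\<lambda>n. pa n - 2 / (real n - 1) \<le> real (M1 n) / real n) sequentially"
      using ev3 by eventually_elim (use P in \<open>force simp: abs_le_iff\<close>)
    show "eventually (\<lambda>n. real (M1 n) / real n \<le> pa n + 2 / (real n - 1)) sequentially"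
      using ev3 by eventually_elim (use P in \<open>force simp: abs_le_iff\<close>)
  qed (use tendsto_diff[OF pa_lim d2_lim] tendsto_add[OF pa_lim d2_lim] in simp_all)
  have M2_lim: "(\<lambda>n. real (M2 n) / real n) \<longlonglongrightarrow> \<beta>"
  proof (rule tendsto_sandwich[where f = "\<lambda>n. pb n - 2 / (real n - 1)" and h = "\<lambda>n. pb n + 2 / (real n - 1)"])
    show "eventually (\<lambda>n. pb n - 2 / (real n - 1) \<le> real (M2 n) / real n) sequentially"
      using ev3 by eventually_elim (use P in \<open>force simp: abs_le_iff\<close>)
    show "eventually (\<lambda>n. real (M2 n) / real n \<le> pb n + 2 / (real n - 1)) sequentially"
      using ev3 by eventually_elim (use P in \<open>force simp: abs_le_iff\<close>)
  qed (use tendsto_diff[OF pb_lim d2_lim] tendsto_add[OF pb_lim d2_lim] in simp_all)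
  show ?thesis using M1_lim M2_lim E_lim target by simp
qed

end
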